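(* Let $0\le a\le\pi/2$, $n\in\mathbb N^*$ and $\ell\in\mathbb N$ with $\ell\ge n$. Then $$\int_a^{\pi/2}|v_{\ell,n}(x)|^2\cos x\,dx\ \ge\ C_{\ell,n}\cos^{2n+2}a,\qquad C_{\ell,n}=\frac{(2\ell+1)(n+1)}{2^{2n+2}}\,\frac{(\ell-n)!\,(\ell+n)!}{((\ell+1)!)^2}.$$
   Context: $v_{\ell,n}(x)=\sqrt{\frac{2\ell+1}{2}\frac{(\ell-n)!}{(\ell+n)!}}\,P_\ell^n(\sin x)$ for $x\in[-\pi/2,\pi/2]$, where $P_\ell^n(t)=(-1)^n(1-t^2)^{n/2}\frac{d^n}{dt^n}P_\ell(t)$ is the associated Legendre function of the first kind and $P_\ell$ is the Legendre polynomial of degree $\ell$. *)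

theory Defs
  imports "HOL-Analysis.Analysis" "HOL-Computational_Algebra.Polynomial"
begin

definition legendre_poly :: "nat \<Rightarrow> real poly" where
  "legendre_poly l = smult (1 / (2 ^ l * fact l)) ((pderiv ^^ l) ([:-1, 0, 1:] ^ l))"

text \<open>Associated Legendre function of the first kind (with Condon-Shortley phase):
  P_l^n(t) = (-1)^n (1 - t^2)^(n/2) (d/dt)^n P_l(t).\<close>
definition assoc_legendre :: "nat \<Rightarrow> nat \<Rightarrow> real \<Rightarrow> real" where
  "assoc_legendre l n t =
     (-1) ^ n * sqrt (1 - t\<^sup>2) ^ n * poly ((pderiv ^^ n) (legendre_poly l)) t"

definition v_fun :: "nat \<Rightarrow> nat \<Rightarrow> real \<Rightarrow> real" where
  "v_fun l n x =
     sqrt ((2 * real l + 1) / 2 * (fact (l - n) / fact (l + n))) * assoc_legendre l n (sin x)"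

end

theory Submission
  imports Defs
begin


lemma alt_shift:
  fixes g :: "nat \<Rightarrow> real"
  shows "(\<Sum>k\<le>Suc m. (-1)^k * real (Suc m choose k) * g k)
       = (\<Sum>k\<le>m. (-1)^k * real (m choose k) * (g k - g (Suc k)))"
proof -
  have e1: "(\<Sum>k\<le>Suc m. (-1)^k * real (Suc m choose k) * g k)
     = g 0 + (\<Sum>k\<le>m. (-1)^(Suc k) * real (m choose k) * g (Suc k))
           + (\<Sum>k\<le>m. (-1)^(Suc k) * real (m choose Suc k) * g (Suc k))"
  proof -
    have "(\<Sum>k\<le>Suc m. (-1)^k * real (Suc m choose k) * g k)
       = g 0 + (\<Sum>k\<le>m. (-1)^(Suc k) * real (m choose k) * g (Suc k)
           + (-1)^(Suc k) * real (m choose Suc k) * g (Suc k))"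
      by (subst sum.atMost_Suc_shift) (simp add: algebra_simps)
    then show ?thesis by (simp only: sum.distrib add.assoc)
  qed
  have e2: "(\<Sum>k\<le>Suc m. (-1)^k * real (m choose k) * g k)
     = g 0 + (\<Sum>k\<le>m. (-1)^(Suc k) * real (m choose Suc k) * g (Suc k))"
    by (subst sum.atMost_Suc_shift) simp
  have e3: "(\<Sum>k\<le>Suc m. (-1)^k * real (m choose k) * g k) = (\<Sum>k\<le>m. (-1)^k * real (m choose k) * g k)"
    by simp
  have r1: "(\<Sum>k\<le>m. (-1)^k * real (m choose k) * (g k - g (Suc k)))
     = (\<Sum>k\<le>m. (-1)^k * real (m choose k) * g k) - (\<Sum>k\<le>m. (-1)^k * real (m choose k) * g (Suc k))"
    by (simp only: right_diff_distrib sum_subtractf)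
  have r2: "(\<Sum>k\<le>m. (-1)^(Suc k) * real (m choose k) * g (Suc k)) = - (\<Sum>k\<le>m. (-1)^k * real (m choose k) * g (Suc k))"
    by (simp add: sum_negf[symmetric])
  show ?thesis using e1 e2 e3 r1 r2 by linarith
qed

lemma degree_shift_diff:
  fixes p :: "real poly"
  assumes "degree p > 0"
  shows "degree (p - pcompose p [:1,1:]) < degree p"
proof -
  let ?q = "pcompose p [:1,1:]"
  have dq: "degree ?q = degree p" by (simp add: degree_pcompose)
  have lq: "lead_coeff ?q = lead_coeff p" by (simp add: lead_coeff_comp)
  have le: "degree (p - ?q) \<le> degree p" using degree_diff_le[of p "degree p" ?q] dq by simp
  have c: "coeff (p - ?q) (degree p) = 0" using lq dq by simp
  show ?thesis
  proof (cases "p - ?q = 0")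
    case True then show ?thesis using assms by simp
  next
    case False
    then have "degree (p - ?q) \<noteq> degree p" using c by (metis leading_coeff_0_iff)
    then show ?thesis using le by simp
  qed
qed

lemma F1:
  fixes p :: "real poly"
  assumes "degree p < m"
  shows "(\<Sum>k\<le>m. (-1)^k * real (m choose k) * poly p (real k)) = 0"
  using assms
proof (induction m arbitrary: p)
  case 0 then show ?case by simp
next
  case (Suc m)
  have "(\<Sum>k\<le>Suc m. (-1)^k * real (Suc m choose k) * poly p (real k))
     = (\<Sum>k\<le>m. (-1)^k * real (m choose k) * (poly p (real k) - poly p (real (Suc k))))"
    by (rule alt_shift)
  also have "\<dots> = (\<Sum>k\<le>m. (-1)^k * real (m choose k) * poly (p - pcompose p [:1,1:]) (real k))"
    by (simp add: poly_pcompose algebra_simps)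
  also have "\<dots> = 0"
  proof (cases "degree p = 0")
    case True
    then obtain c where "p = [:c:]" by (metis degree_eq_zeroE)
    then show ?thesis by (simp add: pcompose_pCons)
  next
    case False
    then show ?thesis using Suc.IH[of "p - pcompose p [:1,1:]"] Suc.prems degree_shift_diff[of p] by simp
  qed
  finally show ?case .
qed

lemma F2:
  "(\<Sum>k\<le>m. (-1)^k * real (m choose k) * (1 / (real n + real k + 1))) = fact n * fact m / fact (n+m+1)"
proof (induction m arbitrary: n)
  case 0 then show ?case by (simp add: fact_Suc)
next
  case (Suc m)
  have "(\<Sum>k\<le>Suc m. (-1)^k * real (Suc m choose k) * (1 / (real n + real k + 1)))
     = (\<Sum>k\<le>m. (-1)^k * real (m choose k) * (1 / (real n + real k + 1) - 1 / (real n + real (Suc k) + 1)))"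
    by (rule alt_shift)
  also have "\<dots> = (\<Sum>k\<le>m. (-1)^k * real (m choose k) * (1 / (real n + real k + 1)))
        - (\<Sum>k\<le>m. (-1)^k * real (m choose k) * (1 / (real (Suc n) + real k + 1)))"
    by (simp add: sum_subtractf algebra_simps)
  also have "\<dots> = fact n * fact m / fact (n+m+1) - fact (Suc n) * fact m / fact (Suc n + m + 1)"
    using Suc.IH[of n] Suc.IH[of "Suc n"] by simp
  also have "\<dots> = fact n * fact (Suc m) / fact (n + Suc m + 1)"
  proof -
    have a: "fact (Suc n + m + 1) = (real n + real m + 2) * (fact (n+m+1) :: real)"
      by (simp add: algebra_simps)
    have b: "fact (n + Suc m + 1) = (real n + real m + 2) * (fact (n+m+1) :: real)"
      by (simp add: algebra_simps)
    have c: "fact (Suc n) = (real n + 1) * (fact n :: real)" "fact (Suc m) = (real m + 1) * (fact m :: real)"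
      by (simp_all add: algebra_simps)
    have p: "(fact (n+m+1)::real) > 0" by simp
    define F where "F = (fact (n+m+1)::real)"
    define A where "A = (fact n::real)"
    define B where "B = (fact m::real)"
    have gen: "A * B / F - (real n + 1) * A * B / ((real n + real m + 2) * F) = A * ((real m + 1) * B) / ((real n + real m + 2) * F)"
      if "F > 0" for F A B :: real
    proof -
      have h: "(real n + real m + 2) \<noteq> 0" by linarith
      have g2: "A * B / F - N * A * B / (D * F) = A * (M * B) / (D * F)"
        if "F > 0" "D \<noteq> 0" "D = N + M" for F A B D N M :: real
      proof -
        have "A * B / F = A * B * D / (D * F)" using that by simp
        then have "A * B / F - N * A * B / (D * F) = (A * B * D - N * A * B) / (D * F)"
          by (simp add: diff_divide_distrib)
        also have "A * B * D - N * A * B = A * (M * B)" using that(3) by (simp add: algebra_simps)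
        finally show ?thesis .
      qed
      show ?thesis using g2[of F "real n + real m + 2" "real n + 1" "real m + 1" A B] that h by simp
    qed
    have "A * B / F - (real n + 1) * A * B / ((real n + real m + 2) * F) = A * ((real m + 1) * B) / ((real n + real m + 2) * F)"
      using p unfolding F_def by (rule gen)
    then show ?thesis unfolding a b c A_def B_def F_def by (simp add: mult.assoc)
  qed
  finally show ?case .
qed




definition Pm :: "nat \<Rightarrow> nat \<Rightarrow> real poly" where
  "Pm n m = (\<Prod>i\<in>{2..m+1}. [:real n + real i, 1:])"

lemma poly_Pm: "poly (Pm n m) x = (\<Prod>i\<in>{2..m+1}. x + real n + real i)"
  unfolding Pm_def poly_prod by (simp add: algebra_simps)

lemma degree_Pm: "degree (Pm n m) \<le> m"
proof -
  have "degree (Pm n m) \<le> sum (degree \<circ> (\<lambda>i. [:real n + real i, 1:])) {2..m+1}"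
    unfolding Pm_def by (rule degree_prod_sum_le) simp
  also have "\<dots> = m" by simp
  finally show ?thesis .
qed

lemma Mz:
  fixes z :: real
  assumes "z > 0"
  shows "(\<Sum>k\<le>m. (-1)^k * real (m choose k) * poly (Pm n m) (real k) / (z + real k))
     = poly (Pm n m) (-z) * (\<Sum>k\<le>m. (-1)^k * real (m choose k) * (1 / (z + real k)))"
proof -
  define R where "R = synthetic_div (Pm n m) (-z)"
  have eq: "poly (Pm n m) x = (x + z) * poly R x + poly (Pm n m) (-z)" for x
  proof -
    have "poly ([:- (-z), 1:] * R + [:poly (Pm n m) (-z):]) x = poly (Pm n m) x"
      unfolding R_def synthetic_div_correct' ..
    then show ?thesis by (simp add: algebra_simps)
  qed
  have "(\<Sum>k\<le>m. (-1)^k * real (m choose k) * poly (Pm n m) (real k) / (z + real k))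
      = (\<Sum>k\<le>m. (-1)^k * real (m choose k) * poly R (real k))
        + (\<Sum>k\<le>m. poly (Pm n m) (-z) * ((-1)^k * real (m choose k) * (1 / (z + real k))))"
    unfolding sum.distrib[symmetric]
  proof (rule sum.cong[OF refl])
    fix k assume "k \<in> {..m}"
    have pos: "z + real k \<noteq> 0" using assms by linarith
    show "(-1)^k * real (m choose k) * poly (Pm n m) (real k) / (z + real k)
        = (-1)^k * real (m choose k) * poly R (real k) + poly (Pm n m) (-z) * ((-1)^k * real (m choose k) * (1 / (z + real k)))"
    proof -
      have e: "poly (Pm n m) (real k) = (real k + z) * poly R (real k) + poly (Pm n m) (-z)" by (rule eq)
      show ?thesis unfolding e using pos by (simp add: field_simps)
    qed
  qed
  also have "(\<Sum>k\<le>m. (-1)^k * real (m choose k) * poly R (real k)) = 0"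
  proof (cases "m = 0")
    case True
    have "degree (Pm n m) = 0" using degree_Pm[of n m] True by simp
    then obtain c0 where c0: "Pm n m = [:c0:]" by (rule degree_eq_zeroE)
    have "R = 0" unfolding R_def c0 by simp
    then show ?thesis by simp
  next
    case False
    have "degree R < m" unfolding R_def degree_synthetic_div using degree_Pm[of n m] False by linarith
    then show ?thesis by (rule F1)
  qed
  finally show ?thesis by (simp add: sum_distrib_left)
qed

lemma M0:
  "(\<Sum>k\<le>m. (-1)^k * real (m choose k) * poly (Pm n m) (real k) / (real n + 1 + real k))
     = fact m * (fact n * fact m / fact (n+m+1))"
proof -
  have "poly (Pm n m) (-(real n + 1)) = (\<Prod>i\<in>{2..m+1}. real i - 1)"
    unfolding poly_Pm by (rule prod.cong) auto
  also have "\<dots> = fact m"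
  proof (induction m)
    case 0 then show ?case by simp
  next
    case (Suc m)
    have "(\<Prod>i\<in>{2..Suc m + 1}. real i - 1) = (\<Prod>i\<in>{2..m + 1}. real i - 1) * (real (Suc m + 1) - 1)"
      by (simp add: prod.cl_ivl_Suc)
    then show ?case using Suc.IH by (simp add: fact_Suc algebra_simps)
  qed
  finally have p: "poly (Pm n m) (-(real n + 1)) = fact m" .
  have "(\<Sum>k\<le>m. (-1)^k * real (m choose k) * poly (Pm n m) (real k) / (real n + 1 + real k))
     = poly (Pm n m) (-(real n + 1)) * (\<Sum>k\<le>m. (-1)^k * real (m choose k) * (1 / (real n + 1 + real k)))"
    by (rule Mz) simp
  also have "(\<Sum>k\<le>m. (-1)^k * real (m choose k) * (1 / (real n + 1 + real k)))
     = (\<Sum>k\<le>m. (-1)^k * real (m choose k) * (1 / (real n + real k + 1)))"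
    by (simp add: algebra_simps)
  finally show ?thesis using p F2[of m n] by simp
qed

lemma Mj:
  assumes "1 \<le> j" "j \<le> m"
  shows "(\<Sum>k\<le>m. (-1)^k * real (m choose k) * poly (Pm n m) (real k) / (real n + real j + 1 + real k)) = 0"
proof -
  have "poly (Pm n m) (-(real n + real j + 1)) = (\<Prod>i\<in>{2..m+1}. real i - real j - 1)"
    unfolding poly_Pm by (rule prod.cong) auto
  also have "\<dots> = 0"
  proof (rule prod_zero)
    show "\<exists>i\<in>{2..m+1}. real i - real j - 1 = 0" using assms by (intro bexI[of _ "j+1"]) auto
  qed simp
  finally have p: "poly (Pm n m) (-(real n + real j + 1)) = 0" .
  show ?thesis using Mz[of "real n + real j + 1" m n] p by simp
qed




lemma int_pow:
  fixes s :: real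
  assumes "s \<le> 1"
  shows "((\<lambda>t. (1-t)^p) has_integral (1-s)^(p+1) / real (p+1)) {s..1}"
proof -
  have d: "((\<lambda>t. - ((1-t)^(p+1) / real (p+1))) has_vector_derivative (1-t)^p) (at t within {s..1})" for t
  proof -
    have "((\<lambda>t. - ((1-t)^(p+1) / real (p+1))) has_real_derivative (1-t)^p) (at t within {s..1})"
    proof -
      have "((\<lambda>t. (1-t)^Suc p) has_real_derivative (1 + real p) * ((-1) * (1-t)^p)) (at t within {s..1})"
        by (intro DERIV_power_Suc) (auto intro!: derivative_eq_intros)
      then have "((\<lambda>t. - ((1-t)^Suc p / real (Suc p))) has_real_derivative
              - ((1 + real p) * ((-1) * (1-t)^p) / real (Suc p))) (at t within {s..1})"
        by (intro DERIV_minus DERIV_cdivide)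
      moreover have "- ((1 + real p) * ((-1) * (1-t)^p) / real (Suc p)) = (1-t)^p"
        by (simp add: field_simps)
      ultimately show ?thesis by simp
    qed
    then show ?thesis by (simp add: has_real_derivative_iff_has_vector_derivative)
  qed
  have "((\<lambda>t. (1-t)^p) has_integral ((- ((1-1)^(p+1) / real (p+1))) - (- ((1-s)^(p+1) / real (p+1))))) {s..1}"
    by (rule fundamental_theorem_of_calculus[OF assms d])
  then show ?thesis by simp
qed

definition M0v :: "nat \<Rightarrow> nat \<Rightarrow> real" where
  "M0v n m = fact m * (fact n * fact m / fact (n+m+1))"

lemma moments:
  fixes s :: real and n m j :: nat
  assumes "s < 1" "j \<le> m"
  defines "d \<equiv> 1 - s"
  defines "a \<equiv> (\<lambda>k. (-1)^k * real (m choose k) * poly (Pm n m) (real k))"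
  shows "((\<lambda>t. (1-t)^(n+j) * (\<Sum>k\<le>m. a k / d^k * (1-t)^k)) has_integral
           (if j = 0 then d^(n+1) * M0v n m else 0)) {s..1}"
proof -
  have dpos: "d > 0" using assms unfolding d_def by simp
  have h: "((\<lambda>t. \<Sum>k\<le>m. a k / d^k * (1-t)^(n+j+k)) has_integral
          (\<Sum>k\<le>m. a k / d^k * (d^(n+j+k+1) / real (n+j+k+1)))) {s..1}"
    unfolding d_def using assms by (intro has_integral_sum has_integral_mult_right int_pow) auto
  have "(\<Sum>k\<le>m. a k / d^k * (d^(n+j+k+1) / real (n+j+k+1)))
      = d^(n+j+1) * (\<Sum>k\<le>m. (-1)^k * real (m choose k) * poly (Pm n m) (real k) / (real n + real j + 1 + real k))"
    unfolding sum_distrib_left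
  proof (rule sum.cong[OF refl])
    fix k
    have "d^(n+j+k+1) = d^(n+j+1) * d^k" by (simp add: power_add[symmetric])
    then show "a k / d^k * (d^(n+j+k+1) / real (n+j+k+1))
      = d^(n+j+1) * ((-1)^k * real (m choose k) * poly (Pm n m) (real k) / (real n + real j + 1 + real k))"
      using dpos unfolding a_def by (simp add: field_simps)
  qed
  also have "\<dots> = (if j = 0 then d^(n+1) * M0v n m else 0)"
  proof (cases "j = 0")
    case True then show ?thesis using M0[of m n] by (simp add: M0v_def)
  next
    case False then show ?thesis using Mj[of j m n] assms by simp
  qed
  finally have e: "(\<Sum>k\<le>m. a k / d^k * (d^(n+j+k+1) / real (n+j+k+1))) = (if j = 0 then d^(n+1) * M0v n m else 0)" .
  have f: "(\<lambda>t. \<Sum>k\<le>m. a k / d^k * (1-t)^(n+j+k)) = (\<lambda>t. (1-t)^(n+j) * (\<Sum>k\<le>m. a k / d^k * (1-t)^k))"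
    by (simp add: sum_distrib_left power_add algebra_simps)
  show ?thesis using h unfolding e f .
qed

lemma Pm0_pos: "poly (Pm n m) 0 > 0"
  unfolding poly_Pm by (rule prod_pos) auto

lemma christ:
  fixes s :: real and n m :: nat and c :: "nat \<Rightarrow> real"
  assumes "s < 1"
  shows "(c 0)^2 * ((1-s)^(n+1) * M0v n m)
           \<le> poly (Pm n m) 0 * integral {s..1} (\<lambda>t. (1-t)^n * (\<Sum>j\<le>m. c j * (1-t)^j)^2)"
proof -
  define d where "d = 1 - s"
  define a where "a = (\<lambda>k. (-1)^k * real (m choose k) * poly (Pm n m) (real k))"
  define Ks where "Ks = (\<lambda>t. \<Sum>k\<le>m. a k / d^k * (1-t)^k)"
  define A where "A = d^(n+1) * M0v n m"
  define K0 where "K0 = poly (Pm n m) 0"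
  have dpos: "d > 0" using assms unfolding d_def by simp
  have Apos: "A > 0" unfolding A_def M0v_def using dpos by simp
  have K0pos: "K0 > 0" unfolding K0_def by (rule Pm0_pos)
  have mom: "((\<lambda>t. (1-t)^(n+j) * Ks t) has_integral (if j = 0 then A else 0)) {s..1}" if "j \<le> m" for j
    using moments[OF assms that] unfolding Ks_def A_def d_def a_def by simp
  have gen: "((\<lambda>t. (1-t)^n * (\<Sum>j\<le>m. e j * (1-t)^j) * Ks t) has_integral e 0 * A) {s..1}" for e :: "nat \<Rightarrow> real"
  proof -
    have "((\<lambda>t. \<Sum>j\<le>m. e j * ((1-t)^(n+j) * Ks t)) has_integral (\<Sum>j\<le>m. e j * (if j = 0 then A else 0))) {s..1}"
      by (intro has_integral_sum has_integral_mult_right mom) auto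
    moreover have "(\<Sum>j\<le>m. e j * (if j = 0 then A else 0)) = e 0 * A"
      by (simp add: if_distrib sum.delta cong: if_cong)
    moreover have "(\<lambda>t. \<Sum>j\<le>m. e j * ((1-t)^(n+j) * Ks t)) = (\<lambda>t. (1-t)^n * (\<Sum>j\<le>m. e j * (1-t)^j) * Ks t)"
      by (simp add: sum_distrib_left sum_distrib_right power_add algebra_simps)
    ultimately show ?thesis by simp
  qed
  define q where "q = (\<lambda>t. \<Sum>j\<le>m. c j * (1-t)^j)"
  have h1: "((\<lambda>t. (1-t)^n * q t * Ks t) has_integral c 0 * A) {s..1}"
    using gen[of c] unfolding q_def .
  have h2: "((\<lambda>t. (1-t)^n * Ks t * Ks t) has_integral K0 * A) {s..1}"
  proof -
    have "((\<lambda>t. (1-t)^n * (\<Sum>j\<le>m. (a j / d^j) * (1-t)^j) * Ks t) has_integral (a 0 / d^0) * A) {s..1}"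
      by (rule gen)
    moreover have "(\<lambda>t. (1-t)^n * (\<Sum>j\<le>m. (a j / d^j) * (1-t)^j) * Ks t) = (\<lambda>t. (1-t)^n * Ks t * Ks t)"
      by (simp only: Ks_def)
    moreover have "(a 0 / d^0) * A = K0 * A" by (simp add: a_def K0_def)
    ultimately show ?thesis by metis
  qed
  have cq: "continuous_on {s..1} (\<lambda>t. (1-t)^n * (q t)^2)"
    unfolding q_def by (intro continuous_intros)
  define Iq where "Iq = integral {s..1} (\<lambda>t. (1-t)^n * (q t)^2)"
  have h0: "((\<lambda>t. (1-t)^n * (q t)^2) has_integral Iq) {s..1}"
    unfolding Iq_def using integrable_continuous_interval[OF cq] by (simp add: has_integral_integral)
  define L where "L = c 0 / K0"
  have hc: "((\<lambda>t. (1-t)^n * (q t)^2 - 2 * L * ((1-t)^n * q t * Ks t) + L^2 * ((1-t)^n * Ks t * Ks t))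
        has_integral (Iq - 2 * L * (c 0 * A) + L^2 * (K0 * A))) {s..1}"
    by (intro has_integral_add has_integral_diff has_integral_mult_right h0 h1 h2)
  have "0 \<le> Iq - 2 * L * (c 0 * A) + L^2 * (K0 * A)"
  proof (rule has_integral_nonneg[OF hc])
    fix t assume "t \<in> {s..1}"
    then have "0 \<le> (1-t)^n" by simp
    then have "0 \<le> (1-t)^n * (q t - L * Ks t)^2" by simp
    also have "\<dots> = (1-t)^n * (q t)^2 - 2 * L * ((1-t)^n * q t * Ks t) + L^2 * ((1-t)^n * Ks t * Ks t)"
      by (simp add: power2_eq_square algebra_simps)
    finally show "0 \<le> (1-t)^n * (q t)^2 - 2 * L * ((1-t)^n * q t * Ks t) + L^2 * ((1-t)^n * Ks t * Ks t)" .
  qed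
  also have "Iq - 2 * L * (c 0 * A) + L^2 * (K0 * A) = Iq - (c 0)^2 * A / K0"
    unfolding L_def using K0pos by (simp add: field_simps power2_eq_square)
  finally have "(c 0)^2 * A / K0 \<le> Iq" by simp
  then have "(c 0)^2 * A \<le> K0 * Iq" using K0pos by (simp add: field_simps)
  then show ?thesis unfolding A_def K0_def Iq_def q_def d_def .
qed




lemma christ_poly:
  fixes Q :: "real poly" and s :: real and n m :: nat
  assumes "s < 1" "degree Q \<le> m"
  shows "(poly Q 1)^2 * ((1-s)^(n+1) * M0v n m)
           \<le> poly (Pm n m) 0 * integral {s..1} (\<lambda>t. (1-t)^n * (poly Q t)^2)"
proof -
  define r where "r = pcompose Q [:1,-1:]"
  have dr: "degree r \<le> m" unfolding r_def using degree_pcompose_le[of Q "[:1,-1:]"] assms(2) by simp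
  have pr: "poly Q t = (\<Sum>j\<le>m. coeff r j * (1-t)^j)" for t
  proof -
    have "poly Q t = poly r (1-t)" unfolding r_def by (simp add: poly_pcompose)
    also have "\<dots> = (\<Sum>j\<le>degree r. coeff r j * (1-t)^j)" by (rule poly_altdef)
    also have "\<dots> = (\<Sum>j\<le>m. coeff r j * (1-t)^j)"
      by (rule sum.mono_neutral_left) (use dr in \<open>auto simp: coeff_eq_0\<close>)
    finally show ?thesis .
  qed
  have c0: "coeff r 0 = poly Q 1"
  proof -
    have "coeff r 0 = poly r 0" by (simp add: poly_0_coeff_0)
    also have "\<dots> = poly Q 1" unfolding r_def poly_pcompose by simp
    finally show ?thesis .
  qed
  have "(\<lambda>t. (1-t)^n * (poly Q t)^2) = (\<lambda>t. (1-t)^n * (\<Sum>j\<le>m. coeff r j * (1-t)^j)^2)"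
    using pr by simp
  then show ?thesis using christ[OF assms(1), of "\<lambda>j. coeff r j" n m] c0 by simp
qed

lemma shift_deriv: fixes p :: "real poly" shows "(pderiv ^^ k) (pcompose p [:1,1:]) = pcompose ((pderiv ^^ k) p) [:(1::real),1:]"
  by (induction k) (simp_all add: pderiv_pcompose pderiv_pCons)

lemma pcompose_pow: "pcompose (p ^ k) q = (pcompose p q) ^ k"
  by (induction k) (simp_all add: pcompose_1 pcompose_mult)

lemma poly_higher_deriv_1:
  fixes p :: "real poly"
  shows "poly ((pderiv ^^ k) p) 1 = fact k * coeff (pcompose p [:1,1:]) k"
proof -
  have "poly ((pderiv ^^ k) p) 1 = poly (pcompose ((pderiv ^^ k) p) [:(1::real),1:]) 0"
    by (simp add: poly_pcompose)
  also have "\<dots> = coeff ((pderiv ^^ k) (pcompose p [:1,1:])) 0"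
    by (simp add: shift_deriv poly_0_coeff_0)
  also have "\<dots> = fact k * coeff (pcompose p [:1,1:]) k"
    by (simp add: coeff_higher_pderiv pochhammer_fact)
  finally show ?thesis .
qed

lemma Q_eq: "(pderiv ^^ n) (legendre_poly l) = smult (1 / (2 ^ l * fact l)) ((pderiv ^^ (n + l)) ([:-1, 0, 1:] ^ l))"
  unfolding legendre_poly_def by (simp add: higher_pderiv_smult funpow_add)

lemma Q_degree: "degree ((pderiv ^^ n) (legendre_poly l)) \<le> l - n"
proof -
  have "degree ([:-1, 0, 1:] ^ l :: real poly) \<le> 2 * l"
    using degree_power_le[of "[:-1, 0, 1:] :: real poly" l] by simp
  then have "degree ((pderiv ^^ (n + l)) ([:-1, 0, 1:] ^ l) :: real poly) \<le> l - n"
    unfolding degree_higher_pderiv by linarith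
  then show ?thesis unfolding Q_eq using degree_smult_le le_trans by blast
qed

lemma Q_at_1:
  assumes "n \<le> l"
  shows "poly ((pderiv ^^ n) (legendre_poly l)) 1 = fact (n + l) * real (l choose n) * 2^(l-n) / (2^l * fact l)"
proof -
  have a: "pcompose [:-1, 0, 1:] [:1,1:] = ([:0,2,1:] :: real poly)"
    by (simp add: pcompose_pCons)
  have b: "([:0,2,1:] :: real poly) = [:0,1:] * [:2,1:]" by simp
  have "coeff (pcompose ([:-1, 0, 1:] ^ l) [:1,1:]) (n + l) = coeff (([:0,1:] * [:2,1:])^l :: real poly) (l + n)"
    unfolding pcompose_pow a b by (simp only: add.commute)
  also have "\<dots> = coeff ([:0,1:]^l * [:2,1:]^l :: real poly) (l + n)"
    by (simp only: power_mult_distrib)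
  also have "\<dots> = coeff (monom 1 l * [:2,1:]^l :: real poly) (l + n)"
    by (simp add: monom_altdef)
  also have "\<dots> = real (l choose n) * 2^(l-n)"
    by (simp add: coeff_monom_mult coeff_linear_poly_power assms)
  finally have c: "coeff (pcompose ([:-1, 0, 1:] ^ l) [:1,1:]) (n + l) = real (l choose n) * 2^(l-n)" .
  show ?thesis unfolding Q_eq poly_smult poly_higher_deriv_1 c by simp
qed




lemma K0_val: "fact (n+1) * poly (Pm n m) 0 = (fact (n + m + 1) :: real)"
proof (induction m)
  case 0 then show ?case by (simp add: Pm_def)
next
  case (Suc m)
  have "poly (Pm n (Suc m)) 0 = poly (Pm n m) 0 * (real n + real (Suc m + 1))"
    unfolding poly_Pm by (simp add: prod.cl_ivl_Suc)
  then show ?case using Suc.IH by (simp add: algebra_simps)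
qed

lemma subst_step:
  fixes a :: real and l n :: nat
  assumes "0 \<le> a" "a \<le> pi / 2"
  defines "C0 \<equiv> (2 * real l + 1) / 2 * (fact (l - n) / fact (l + n))"
  defines "Q \<equiv> (pderiv ^^ n) (legendre_poly l)"
  shows "integral {a..pi/2} (\<lambda>x. \<bar>v_fun l n x\<bar>\<^sup>2 * cos x)
       = C0 * integral {sin a..1} (\<lambda>t. (1 - t^2)^n * (poly Q t)^2)"
proof -
  define f where "f = (\<lambda>t::real. C0 * ((1 - t^2)^n * (poly Q t)^2))"
  have C0nn: "C0 \<ge> 0" unfolding C0_def by simp
  have h: "((\<lambda>x. cos x *\<^sub>R f (sin x)) has_integral (integral {sin a..sin (pi/2)} f)) {a..pi/2}"
  proof (rule has_integral_substitution[where c = "-1" and d = 1])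
    show "a \<le> pi/2" by fact
    show "sin a \<le> sin (pi/2)" by simp
    show "sin ` {a..pi/2} \<subseteq> {-1..1}" by auto
    show "continuous_on {-1..1} f" unfolding f_def by (intro continuous_intros)
    show "\<And>x. x \<in> {a..pi/2} \<Longrightarrow> (sin has_real_derivative cos x) (at x within {a..pi/2})"
      by (auto intro!: derivative_eq_intros)
  qed
  have pt: "\<bar>v_fun l n x\<bar>\<^sup>2 * cos x = cos x *\<^sub>R f (sin x)" for x
  proof -
    have u0: "1 - (sin x)^2 = (cos x)^2" using sin_cos_squared_add[of x] by linarith
    have u: "1 - (sin x)^2 \<ge> 0" unfolding u0 by simp
    have "\<bar>v_fun l n x\<bar>\<^sup>2 = (sqrt C0)^2 * ((-1)^n)^2 * ((sqrt (1 - (sin x)^2))^2)^n * (poly Q (sin x))^2"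
      unfolding v_fun_def assoc_legendre_def C0_def Q_def
      by (simp add: power_mult_distrib power_mult[symmetric] mult.commute[of n 2])
    also have "\<dots> = C0 * ((1 - (sin x)^2)^n * (poly Q (sin x))^2)"
      using u C0nn by (simp add: power_mult[symmetric] mult.commute[of 2 n])
    finally show ?thesis unfolding f_def by simp
  qed
  have cont: "continuous_on {sin a..1} (\<lambda>t. (1 - t^2)^n * (poly Q t)^2)" by (intro continuous_intros)
  have "integral {sin a..1} f = C0 * integral {sin a..1} (\<lambda>t. (1 - t^2)^n * (poly Q t)^2)"
    unfolding f_def by simp
  moreover have "(\<lambda>x. \<bar>v_fun l n x\<bar>\<^sup>2 * cos x) = (\<lambda>x. cos x *\<^sub>R f (sin x))"
    using pt by (rule ext)
  ultimately show ?thesis using integral_unique[OF h] by simp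
qed




lemma alg1:
  fixes fn fm fpn F P N W T :: real
  assumes "fn > 0" "fm > 0" "fpn > 0" "F > 0" "T > 0"
  shows "P / 2 * (fm / fpn) * ((fpn / (T * fn * fm))^2 * (fm * (fn * fm / F)) / (F / ((N + 1) * fn))) * W
       = P * (N + 1) * (fm * fpn / F^2) / T^2 * W / 2"
  using assms by (simp add: field_simps power2_eq_square)

lemma rearr: fixes C A Y B M K :: real
  shows "C * (A * (Y * (B * M) / K)) = C * (Y * M / K) * (A * B)"
  by (simp add: mult_ac)

theorem proposition5p1:
  fixes a :: real and l n :: nat
  assumes "0 \<le> a" and "a \<le> pi / 2" and "1 \<le> n" and "n \<le> l"
  shows "integral {a..pi/2} (\<lambda>x. \<bar>v_fun l n x\<bar>\<^sup>2 * cos x)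
           \<ge> (2 * real l + 1) * (real n + 1) / 2 ^ (2 * n + 2)
               * (fact (l - n) * fact (l + n) / (fact (l + 1))\<^sup>2) * cos a ^ (2 * n + 2)"
proof -
  define s where "s = sin a"
  define Q where "Q = (pderiv ^^ n) (legendre_poly l)"
  define m where "m = l - n"
  define C0 where "C0 = (2 * real l + 1) / 2 * (fact (l - n) / fact (l + n) :: real)"
  define J where "J = integral {s..1} (\<lambda>t. (1 - t^2)^n * (poly Q t)^2)"
  define J1 where "J1 = integral {s..1} (\<lambda>t. (1 - t)^n * (poly Q t)^2)"
  define Tg where "Tg = (2 * real l + 1) * (real n + 1) / 2 ^ (2 * n + 2)
               * (fact (l - n) * fact (l + n) / (fact (l + 1))\<^sup>2) * cos a ^ (2 * n + 2)"
  have L: "integral {a..pi/2} (\<lambda>x. \<bar>v_fun l n x\<bar>\<^sup>2 * cos x) = C0 * J"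
    unfolding J_def C0_def s_def Q_def by (rule subst_step[OF assms(1,2)])
  have s0: "0 \<le> s" unfolding s_def using assms(1,2) by (intro sin_ge_zero) auto
  have s1: "s \<le> 1" unfolding s_def by simp
  have C0pos: "C0 > 0" unfolding C0_def by simp
  have ca: "cos a ^ (2 * n + 2) = (1 - s)^(n+1) * (1 + s)^(n+1)"
  proof -
    have e: "2 * n + 2 = 2 * (n + 1)" by simp
    have "cos a ^ (2 * n + 2) = ((cos a)^2)^(n+1)" unfolding e by (rule power_mult)
    also have "(cos a)^2 = (1 - s) * (1 + s)" unfolding s_def using sin_cos_squared_add[of a]
      by (simp add: algebra_simps power2_eq_square)
    finally show ?thesis by (simp add: power_mult_distrib)
  qed
  have contJ: "continuous_on {s..1} (\<lambda>t. (1 - t^2)^n * (poly Q t)^2)" by (intro continuous_intros)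
  have hJ: "((\<lambda>t. (1 - t^2)^n * (poly Q t)^2) has_integral J) {s..1}"
    unfolding J_def using integrable_continuous_interval[OF contJ] by (simp add: has_integral_integral)
  have contJ1: "continuous_on {s..1} (\<lambda>t. (1 - t)^n * (poly Q t)^2)" by (intro continuous_intros)
  have hJ1: "((\<lambda>t. (1 - t)^n * (poly Q t)^2) has_integral J1) {s..1}"
    unfolding J1_def using integrable_continuous_interval[OF contJ1] by (simp add: has_integral_integral)
  show ?thesis
  proof (cases "s < 1")
    case False
    then have "s = 1" using s1 by simp
    then have "Tg = 0" unfolding Tg_def using ca by simp
    moreover have "J \<ge> 0"
    proof (rule has_integral_nonneg[OF hJ])
      fix t assume "t \<in> {s..1}"
      then have "0 \<le> 1 - t^2" using s0 by (simp add: power_le_one)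
      then show "0 \<le> (1 - t^2)^n * (poly Q t)^2" by simp
    qed
    ultimately have "Tg \<le> C0 * J" using C0pos by simp
    then show ?thesis using L unfolding Tg_def by linarith
  next
    case True
    have JB: "(1 + s)^n * J1 \<le> J"
    proof (rule has_integral_le[OF has_integral_mult_right[OF hJ1] hJ])
      fix t assume t: "t \<in> {s..1}"
      have "(1 + s)^n \<le> (1 + t)^n" using t s0 by (intro power_mono) auto
      moreover have "0 \<le> (1 - t)^n * (poly Q t)^2" using t by simp
      ultimately have "(1 + s)^n * ((1 - t)^n * (poly Q t)^2) \<le> (1 + t)^n * ((1 - t)^n * (poly Q t)^2)"
        by (rule mult_right_mono)
      also have "\<dots> = (1 - t^2)^n * (poly Q t)^2"
        by (simp add: power_mult_distrib[symmetric] power2_eq_square algebra_simps)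
      finally show "(1 + s)^n * ((1 - t)^n * (poly Q t)^2) \<le> (1 - t^2)^n * (poly Q t)^2" .
    qed
    have dQ: "degree Q \<le> m" unfolding Q_def m_def by (rule Q_degree)
    have JC: "(poly Q 1)^2 * ((1-s)^(n+1) * M0v n m) \<le> poly (Pm n m) 0 * J1"
      unfolding J1_def by (rule christ_poly[OF True dQ])
    define fn where "fn = (fact n :: real)"
    define fm where "fm = (fact m :: real)"
    define fpn where "fpn = (fact (l + n) :: real)"
    define F where "F = (fact (l + 1) :: real)"
    have lm: "l = n + m" unfolding m_def using assms(4) by simp
    have Y: "poly Q 1 = fpn / (2^n * fn * fm)"
    proof -
      have "poly Q 1 = fact (n + l) * real (l choose n) * 2^(l-n) / (2^l * fact l)"
        unfolding Q_def by (rule Q_at_1[OF assms(4)])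
      also have "real (l choose n) = fact l / (fn * fm)"
        unfolding fn_def fm_def m_def by (rule binomial_fact[OF assms(4)])
      also have "(2::real)^l = 2^n * 2^(l-n)" by (simp add: power_add[symmetric] assms(4))
      finally show ?thesis unfolding fpn_def by (simp add: add.commute field_simps)
    qed
    have K0: "poly (Pm n m) 0 = F / ((real n + 1) * fn)"
    proof -
      have "fact (n+1) * poly (Pm n m) 0 = (fact (n + m + 1) :: real)" by (rule K0_val)
      moreover have "fact (n + m + 1) = F" unfolding F_def lm by (simp add: algebra_simps)
      moreover have "(fact (n+1) :: real) = (real n + 1) * fn" unfolding fn_def by simp
      ultimately have e: "((real n + 1) * fn) * poly (Pm n m) 0 = F" by simp
      have nz: "(real n + 1) * fn \<noteq> 0" unfolding fn_def by simp
      show ?thesis using e nz by (simp add: eq_divide_eq mult.commute)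
    qed
    have M0: "M0v n m = fm * (fn * fm / F)"
      unfolding M0v_def fm_def fn_def F_def lm by (simp add: algebra_simps)
    have C0v: "C0 = (2 * real l + 1) / 2 * (fm / fpn)" unfolding C0_def fm_def fpn_def m_def ..
    have pos: "fn > 0" "fm > 0" "fpn > 0" "F > 0" unfolding fn_def fm_def fpn_def F_def by simp_all
    have K0pos: "poly (Pm n m) 0 > 0" by (rule Pm0_pos)
    define W where "W = (1 + s)^n * (1 - s)^(n+1)"
    have Wnn: "W \<ge> 0" unfolding W_def using s0 s1 by simp
    define Z where "Z = (2 * real l + 1) * (real n + 1) * (fm * fpn / F^2) / (2^n)^2 * W"
    have Znn: "Z \<ge> 0" unfolding Z_def using pos Wnn by simp
    have J1b: "(poly Q 1)^2 * ((1-s)^(n+1) * M0v n m) / poly (Pm n m) 0 \<le> J1"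
      using JC K0pos by (simp add: field_simps)
    have "C0 * J \<ge> C0 * ((1 + s)^n * J1)" using JB C0pos by simp
    moreover have "C0 * ((1 + s)^n * J1) \<ge> C0 * ((1 + s)^n * ((poly Q 1)^2 * ((1-s)^(n+1) * M0v n m) / poly (Pm n m) 0))"
      using J1b C0pos s0 by (intro mult_left_mono) auto
    moreover have "C0 * ((1 + s)^n * ((poly Q 1)^2 * ((1-s)^(n+1) * M0v n m) / poly (Pm n m) 0)) = Z / 2"
    proof -
      have "C0 * ((1 + s)^n * ((poly Q 1)^2 * ((1-s)^(n+1) * M0v n m) / poly (Pm n m) 0))
          = C0 * ((poly Q 1)^2 * M0v n m / poly (Pm n m) 0) * W"
        unfolding W_def by (rule rearr)
      also have "\<dots> = (2 * real l + 1) / 2 * (fm / fpn) * ((fpn / (2^n * fn * fm))^2 * (fm * (fn * fm / F)) / (F / ((real n + 1) * fn))) * W"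
        unfolding C0v Y K0 M0 by (simp only:)
      also have "\<dots> = Z / 2" unfolding Z_def by (rule alg1[OF pos]) simp
      finally show ?thesis .
    qed
    moreover have "Tg = Z * (1 + s) / 4"
    proof -
      have "(2::real) ^ (2 * n + 2) = 4 * (2^n)^2" by (simp add: power_mult[symmetric] power_add algebra_simps)
      moreover have "fact (l - n) * fact (l + n) = fm * fpn" unfolding fm_def fpn_def m_def ..
      moreover have "(fact (l + 1) :: real) = F" unfolding F_def ..
      ultimately show ?thesis unfolding Tg_def Z_def W_def ca by (simp add: field_simps)
    qed
    moreover have "Z * (1 + s) / 4 \<le> Z / 2" using Znn s1 by (simp add: field_simps mult_left_le)
    ultimately show ?thesis using L unfolding Tg_def[symmetric] by linarith
  qed
qed


end
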